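(* Let $X,Y\ge0$ be random variables with probability density functions $f_X\ge0$ and $f_Y>0$ on $(0,\infty)$, and let $L_X(x)=\int_0^\infty f_X(t)e^{-tx}\,dt$, $L_Y(x)=\int_0^\infty f_Y(t)e^{-tx}\,dt$ $(x>0)$. If one of the conditions (i) $t\mapsto f_X(t)/f_Y(t)$ is increasing (resp. decreasing) on $(0,\infty)$; (ii) there exists $t^*\in(0,\infty)$ such that $t\mapsto f_X(t)/f_Y(t)$ is increasing (resp. decreasing) on $(0,t^* )$ and decreasing (resp. increasing) on $(t^*,\infty)$, and $H_{L_X,L_Y}(0^+)\ge0$ (resp. $\le0$); holds, then $Y\le_{Lt-r}X$ (resp. $X\le_{Lt-r}Y$).
   Context: For a random variable $Z\ge0$ with distribution function $F_Z$, $L_Z(x)=\int_0^\infty e^{-tx}\,dF_Z(t)$, $x>0$. For random variables $X,Y\ge0$, $X\le_{Lt-r}Y$ means that $x\mapsto L_Y(x)/L_X(x)$ is decreasing on $(0,\infty)$. $H_{F,G}=\frac{F'}{G'}G-F$ and $H_{F,G}(0^+)=\lim_{x\to0^+}H_{F,G}(x)$. *)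

theory Defs
  imports "HOL-Analysis.Analysis"
begin

definition is_density :: "(real \<Rightarrow> real) \<Rightarrow> bool" where
  "is_density f \<longleftrightarrow> (\<forall>t>0. f t \<ge> 0) \<and> set_integrable lborel {0<..} f
     \<and> (LBINT t:{0<..}. f t) = 1"

definition lap :: "(real \<Rightarrow> real) \<Rightarrow> real \<Rightarrow> real" where
  "lap f x = (LBINT t:{0<..}. f t * exp (- t * x))"

definition H_fun :: "(real \<Rightarrow> real) \<Rightarrow> (real \<Rightarrow> real) \<Rightarrow> real \<Rightarrow> real" where
  "H_fun F G x = deriv F x / deriv G x * G x - F x"

text \<open>Laplace-transform-ratio order for variables with densities fX, fY:
  X <=_{Lt-r} Y iff x |-> L_Y(x)/L_X(x) is decreasing (nonincreasing) on (0,oo).\<close>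
definition lt_r_le :: "(real \<Rightarrow> real) \<Rightarrow> (real \<Rightarrow> real) \<Rightarrow> bool" where
  "lt_r_le fX fY \<longleftrightarrow> antimono_on {0<..} (\<lambda>x. lap fY x / lap fX x)"

end

theory Submission
  imports Defs
begin




definition Lw :: "(real \<Rightarrow> real) \<Rightarrow> bool" where
  "Lw p \<longleftrightarrow> (\<forall>x>0. set_integrable lborel {0<..} (\<lambda>t. p t * exp (- t * x)))"

lemma sbm_of_si: "set_integrable lborel A (f::real\<Rightarrow>real) \<Longrightarrow> set_borel_measurable lborel A f"
  unfolding set_integrable_def set_borel_measurable_def by (rule borel_measurable_integrable)

lemma sbm_mult:
  assumes "set_borel_measurable lborel A (f::real\<Rightarrow>real)" "g \<in> borel_measurable lborel"
  shows "set_borel_measurable lborel A (\<lambda>t. f t * g t)"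
proof -
  have "(\<lambda>t. indicator A t *\<^sub>R (f t * g t)) = (\<lambda>t. (indicator A t *\<^sub>R f t) * g t)" by auto
  then show ?thesis using assms unfolding set_borel_measurable_def by simp
qed

lemma Lw_from_int:
  assumes "set_integrable lborel {0<..} p"
  shows "Lw p"
  unfolding Lw_def
proof (intro allI impI)
  fix x :: real assume x: "x > 0"
  show "set_integrable lborel {0<..} (\<lambda>t. p t * exp (- t * x))"
  proof (rule set_integrable_bound[OF assms])
    show "set_borel_measurable lborel {0<..} (\<lambda>t. p t * exp (- t * x))"
      by (rule sbm_mult[OF sbm_of_si[OF assms]]) simp
    show "AE t in lborel. t \<in> {0<..} \<longrightarrow> norm (p t * exp (- t * x)) \<le> norm (p t)"
    proof (intro AE_I2 impI)
      fix t :: real assume "t \<in> {0<..}"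
      then have "exp (- t * x) \<le> 1" using x by simp
      then show "norm (p t * exp (- t * x)) \<le> norm (p t)"
        by (simp add: abs_mult mult_left_le)
    qed
  qed
qed

lemma texp_bound:
  fixes t x :: real
  assumes "t > 0" "x > 0"
  shows "t * exp (- t * x) \<le> (2 / x) * exp (- t * (x/2))"
proof -
  have "t * x / 2 \<le> exp (t * x / (2::real))"
    using exp_ge_add_one_self[of "t*x/2"] by linarith
  then have "t \<le> (2/x) * exp (t * x / 2)" using assms by (simp add: field_simps)
  then have "t * exp (- t * x) \<le> (2/x) * exp (t * x / 2) * exp (- t * x)"
    by (rule mult_right_mono) simp
  also have "\<dots> = (2/x) * exp (- t * (x/2))"
    by (simp add: mult.assoc flip: exp_add)
  finally show ?thesis .
qed

lemma Lw_t:
  assumes "Lw p"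
  shows "Lw (\<lambda>t. t * p t)"
  unfolding Lw_def
proof (intro allI impI)
  fix x :: real assume x: "x > 0"
  have i0: "set_integrable lborel {0<..} (\<lambda>t. p t * exp (- t * (x/2)))"
    using assms[unfolded Lw_def, rule_format, of "x/2"] x by simp
  have i: "set_integrable lborel {0<..} (\<lambda>t. (2/x) * (p t * exp (- t * (x/2))))"
    using i0 by simp
  show "set_integrable lborel {0<..} (\<lambda>t. t * p t * exp (- t * x))"
  proof (rule set_integrable_bound[OF i])
    have "set_borel_measurable lborel {0<..} (\<lambda>t. (p t * exp (- t * (x/2))) * (t * exp (- t * (x/2))))"
      by (rule sbm_mult[OF sbm_of_si[OF i0]]) simp
    moreover have "(\<lambda>t. (p t * exp (- t * (x/2))) * (t * exp (- t * (x/2)))) = (\<lambda>t. t * p t * exp (- t * x))"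
      by (auto simp: mult_ac simp flip: exp_add)
    ultimately show "set_borel_measurable lborel {0<..} (\<lambda>t. t * p t * exp (- t * x))" by simp
    show "AE t in lborel. t \<in> {0<..} \<longrightarrow> norm (t * p t * exp (- t * x)) \<le> norm ((2/x) * (p t * exp (- t * (x/2))))"
    proof (intro AE_I2 impI)
      fix t :: real assume "t \<in> {0<..}"
      then have t: "t > 0" by simp
      have "norm (t * p t * exp (- t * x)) = \<bar>p t\<bar> * (t * exp (- t * x))"
        using t by (simp add: abs_mult)
      also have "\<dots> \<le> \<bar>p t\<bar> * ((2 / x) * exp (- t * (x/2)))"
        by (rule mult_left_mono[OF texp_bound[OF t x]]) simp
      also have "\<dots> = norm ((2/x) * (p t * exp (- t * (x/2))))"
        using x by (simp add: abs_mult)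
      finally show "norm (t * p t * exp (- t * x)) \<le> norm ((2/x) * (p t * exp (- t * (x/2))))" .
    qed
  qed
qed

lemma exp_taylor2:
  fixes y :: real
  shows "\<bar>exp y - 1 - y\<bar> \<le> exp \<bar>y\<bar> / 2 * y\<^sup>2"
proof -
  obtain s where s: "\<bar>s\<bar> \<le> \<bar>y\<bar>" "exp y = (\<Sum>m<2. (y ^ m) / fact m) + (exp s / fact 2) * y ^ 2"
    using Maclaurin_exp_le[of y 2] by blast
  have "(\<Sum>m<2. (y ^ m) / fact m) = 1 + y" by (simp add: numeral_2_eq_2)
  then have "exp y - 1 - y = exp s / 2 * y\<^sup>2" using s(2) by simp
  then have "\<bar>exp y - 1 - y\<bar> = exp s / 2 * y\<^sup>2" by (metis abs_of_nonneg exp_ge_zero zero_le_power2 divide_nonneg_pos mult_nonneg_nonneg zero_less_numeral)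
  moreover have "exp s \<le> exp \<bar>y\<bar>" using s(1) by simp
  ultimately show ?thesis
    by (simp add: divide_right_mono mult_right_mono)
qed

lemma Lw_abs: assumes "Lw p" shows "Lw (\<lambda>t. \<bar>p t\<bar>)"
  unfolding Lw_def
proof (intro allI impI)
  fix x :: real assume "x > 0"
  have "set_integrable lborel {0<..} (\<lambda>t. p t * exp (- t * x))"
    using assms \<open>x > 0\<close> unfolding Lw_def by blast
  then have "set_integrable lborel {0<..} (\<lambda>t. \<bar>p t * exp (- t * x)\<bar>)"
    by (rule set_integrable_abs)
  then show "set_integrable lborel {0<..} (\<lambda>t. \<bar>p t\<bar> * exp (- t * x))"
    by (simp add: abs_mult)
qed

lemma Lw_add: "Lw p \<Longrightarrow> Lw q \<Longrightarrow> Lw (\<lambda>t. p t + q t)"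
  unfolding Lw_def by (simp add: distrib_right)

lemma Lw_diff: "Lw p \<Longrightarrow> Lw q \<Longrightarrow> Lw (\<lambda>t. p t - q t)"
  unfolding Lw_def by (simp add: left_diff_distrib)

lemma Lw_cmult: "Lw p \<Longrightarrow> Lw (\<lambda>t. c * p t)"
  unfolding Lw_def by (simp add: mult.assoc)

lemma Lw_minus: "Lw p \<Longrightarrow> Lw (\<lambda>t. - p t)"
  using Lw_cmult[of p "-1"] by simp

lemma Lw_si: "Lw p \<Longrightarrow> x > 0 \<Longrightarrow> set_integrable lborel {0<..} (\<lambda>t. p t * exp (- t * x))"
  unfolding Lw_def by blast

lemma lap_add: "Lw p \<Longrightarrow> Lw q \<Longrightarrow> x > 0 \<Longrightarrow> lap (\<lambda>t. p t + q t) x = lap p x + lap q x"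
  unfolding lap_def using Lw_si[of p x] Lw_si[of q x] by (simp add: distrib_right)

lemma lap_diff: "Lw p \<Longrightarrow> Lw q \<Longrightarrow> x > 0 \<Longrightarrow> lap (\<lambda>t. p t - q t) x = lap p x - lap q x"
  unfolding lap_def using Lw_si[of p x] Lw_si[of q x] by (simp add: left_diff_distrib)

lemma lap_cmult: "lap (\<lambda>t. c * p t) x = c * lap p x"
  unfolding lap_def by (simp add: mult.assoc)

lemma lap_minus: "lap (\<lambda>t. - p t) x = - lap p x"
  using lap_cmult[of "-1" p x] by simp

lemma lap_deriv:
  assumes p: "Lw p" and x: "x > 0"
  shows "(lap p has_real_derivative - lap (\<lambda>t. t * p t) x) (at x)"
proof -
  define C where "C = (LBINT t:{0<..}. \<bar>t * (t * p t)\<bar> * exp (- t * (x/2)))"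
  have iC: "set_integrable lborel {0<..} (\<lambda>t. \<bar>t * (t * p t)\<bar> * exp (- t * (x/2)))"
    using Lw_si[OF Lw_abs[OF Lw_t[OF Lw_t[OF p]]], of "x/2"] x by simp
  have key: "\<bar>(lap p (x+h) - lap p x)/h - (- lap (\<lambda>t. t * p t) x)\<bar> \<le> \<bar>h\<bar> * C / 2"
    if h: "h \<noteq> 0" "\<bar>h\<bar> < x/2" for h
  proof -
    have xh: "x + h > 0" using h x by linarith
    have I1: "set_integrable lborel {0<..} (\<lambda>t. p t * exp (- t * (x+h)))" using Lw_si[OF p xh] .
    have I0: "set_integrable lborel {0<..} (\<lambda>t. p t * exp (- t * x))" using Lw_si[OF p x] .
    have IM: "set_integrable lborel {0<..} (\<lambda>t. h * (t * p t * exp (- t * x)))"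
      using Lw_si[OF Lw_t[OF p] x] by simp
    define D where "D t = p t * exp (- t * (x+h)) - p t * exp (- t * x) + h * (t * p t * exp (- t * x))" for t
    have ID: "set_integrable lborel {0<..} D"
      unfolding D_def using I1 I0 IM by (intro set_integral_add set_integral_diff) auto
    have "lap p (x+h) - lap p x + h * lap (\<lambda>t. t * p t) x = (LBINT t:{0<..}. D t)"
      unfolding D_def lap_def using I1 I0 IM by (simp add: set_integral_add set_integral_diff)
    also have "\<bar>\<dots>\<bar> \<le> (LBINT t:{0<..}. \<bar>D t\<bar>)"
      using set_integral_norm_bound[OF ID] by simp
    also have "\<dots> \<le> (LBINT t:{0<..}. h\<^sup>2 / 2 * (\<bar>t * (t * p t)\<bar> * exp (- t * (x/2))))"
    proof (rule set_integral_mono)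
      show "set_integrable lborel {0<..} (\<lambda>t. \<bar>D t\<bar>)" using set_integrable_abs[OF ID] .
      show "set_integrable lborel {0<..} (\<lambda>t. h\<^sup>2 / 2 * (\<bar>t * (t * p t)\<bar> * exp (- t * (x/2))))"
        using iC by simp
      fix t :: real assume "t \<in> {0<..}"
      then have t: "t > 0" by simp
      have "t * \<bar>h\<bar> \<le> t * (x/2)" using t h by (intro mult_left_mono) auto
      then have th: "exp (- t * x) * exp (t * \<bar>h\<bar>) \<le> exp (- t * (x/2))"
        unfolding exp_add[symmetric] by simp
      have "D t = p t * exp (- t * x) * (exp (- t * h) - 1 - (- t * h))"
        unfolding D_def by (simp add: algebra_simps flip: exp_add)
      then have "\<bar>D t\<bar> = \<bar>p t\<bar> * exp (- t * x) * \<bar>exp (- t * h) - 1 - (- t * h)\<bar>"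
        by (simp add: abs_mult)
      also have "\<dots> \<le> \<bar>p t\<bar> * exp (- t * x) * (exp \<bar>- t * h\<bar> / 2 * (- t * h)\<^sup>2)"
        by (intro mult_left_mono exp_taylor2) auto
      also have "\<dots> = \<bar>p t\<bar> * (exp (- t * x) * exp (t * \<bar>h\<bar>)) / 2 * t\<^sup>2 * h\<^sup>2"
        using t by (simp add: abs_mult power2_eq_square)
      also have "\<bar>p t\<bar> * (exp (- t * x) * exp (t * \<bar>h\<bar>)) / 2 * t\<^sup>2 * h\<^sup>2 \<le> \<bar>p t\<bar> * exp (- t * (x/2)) / 2 * t\<^sup>2 * h\<^sup>2"
        using th by (intro mult_right_mono divide_right_mono mult_left_mono) auto
      also have "\<dots> = h\<^sup>2 / 2 * (\<bar>t * (t * p t)\<bar> * exp (- t * (x/2)))"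
        using t by (simp add: abs_mult power2_eq_square)
      finally show "\<bar>D t\<bar> \<le> h\<^sup>2 / 2 * (\<bar>t * (t * p t)\<bar> * exp (- t * (x/2)))" .
    qed
    also have "\<dots> = h\<^sup>2 / 2 * C" unfolding C_def by simp
    finally have "\<bar>lap p (x+h) - lap p x + h * lap (\<lambda>t. t * p t) x\<bar> \<le> h\<^sup>2 / 2 * C" .
    moreover have "(lap p (x+h) - lap p x)/h - (- lap (\<lambda>t. t * p t) x) = (lap p (x+h) - lap p x + h * lap (\<lambda>t. t * p t) x) / h"
      using h by (simp add: field_simps)
    ultimately show ?thesis using h
      by (simp add: abs_divide power2_eq_square divide_le_eq field_simps)
  qed
  have "((\<lambda>h. (lap p (x+h) - lap p x)/h - (- lap (\<lambda>t. t * p t) x)) \<longlongrightarrow> 0) (at 0)"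
  proof (rule Lim_null_comparison)
    show "\<forall>\<^sub>F h in at 0. norm ((lap p (x+h) - lap p x)/h - (- lap (\<lambda>t. t * p t) x)) \<le> \<bar>h\<bar> * C / 2"
      unfolding eventually_at
    proof (intro exI[of _ "x/2"] conjI ballI impI)
      show "x/2 > 0" using x by simp
      fix h :: real assume "h \<noteq> 0 \<and> dist h 0 < x/2"
      then have "h \<noteq> 0" "\<bar>h\<bar> < x/2" by (auto simp: dist_norm)
      from key[OF this]
      show "norm ((lap p (x+h) - lap p x)/h - (- lap (\<lambda>t. t * p t) x)) \<le> \<bar>h\<bar> * C / 2"
        by (simp only: real_norm_def)
    qed
    show "((\<lambda>h. \<bar>h\<bar> * C / 2) \<longlongrightarrow> 0) (at 0)"
      by (auto intro!: tendsto_eq_intros)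
  qed
  then show ?thesis
    unfolding DERIV_def by (subst Lim_null) assumption
qed

lemma si_nonneg:
  fixes f :: "real \<Rightarrow> real"
  assumes "\<forall>t>0. f t \<ge> (0::real)"
  shows "(LBINT t:{0<..}. f t) \<ge> 0"
  unfolding set_lebesgue_integral_def
  using assms by (intro integral_nonneg_AE AE_I2) (auto simp: indicator_def)

lemma si_pos:
  fixes f :: "real \<Rightarrow> real" and a b :: real
  assumes f: "set_integrable lborel {0<..} f" and pos: "\<forall>t\<in>{a<..<b}. f t > (0::real)"
    and nn: "\<forall>t>0. f t \<ge> 0" and ab: "0 \<le> a" "a < b"
  shows "(LBINT t:{0<..}. f t) > 0"
proof (rule ccontr)
  assume "\<not> (LBINT t:{0<..}. f t) > 0"
  with si_nonneg[OF nn] have z: "(LBINT t:{0<..}. f t) = 0" by simp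
  have "AE t in lborel. indicator {0<..} t *\<^sub>R f t = 0"
    using z f nn unfolding set_lebesgue_integral_def set_integrable_def
    by (subst integral_nonneg_eq_0_iff_AE[symmetric]) (auto simp: indicator_def)
  then have "AE t in lborel. t \<notin> {a<..<b}"
  proof (rule eventually_mono)
    fix t assume "indicator {0<..} t *\<^sub>R f t = (0::real)"
    then show "t \<notin> {a<..<b}"
    proof (intro notI)
      assume 1: "indicator {0<..} t *\<^sub>R f t = (0::real)" and 2: "t \<in> {a<..<b}"
      have "t > 0" using ab 2 by auto
      moreover have "f t > 0" using pos 2 by blast
      ultimately show False using 1 by simp
    qed
  qed
  then have "{a<..<b} \<in> null_sets lborel" by (subst AE_iff_null_sets) auto
  then have "emeasure lborel {a<..<b} = 0" by auto
  then show False using ab by simp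
qed

lemma lap_pos:
  assumes "Lw p" "\<forall>t>0. p t > 0" "x > 0"
  shows "lap p x > 0"
  unfolding lap_def
  by (rule si_pos[of _ 0 1]) (use assms in \<open>auto simp: Lw_def\<close>)

lemma lap_nonneg:
  assumes "\<forall>t>0. p t \<ge> 0"
  shows "lap p x \<ge> 0"
  unfolding lap_def using assms by (intro si_nonneg) auto

lemma lap_cong: "(\<And>t. t > 0 \<Longrightarrow> p t = q t) \<Longrightarrow> lap p x = lap q x"
  unfolding lap_def by (intro set_lebesgue_integral_cong) auto

lemma Lw_cong: "Lw p \<Longrightarrow> (\<And>t. t > 0 \<Longrightarrow> p t = q t) \<Longrightarrow> Lw q"
  unfolding Lw_def
proof (intro allI impI)
  fix x :: real assume "\<forall>x>0. set_integrable lborel {0<..} (\<lambda>t. p t * exp (- t * x))" "x > 0"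
    "\<And>t. t > 0 \<Longrightarrow> p t = q t"
  then show "set_integrable lborel {0<..} (\<lambda>t. q t * exp (- t * x))"
    by (subst set_integrable_cong[of lborel lborel "{0<..}" "{0<..}" _ "\<lambda>t. p t * exp (- t * x)"]) auto
qed

definition Hm :: "(real \<Rightarrow> real) \<Rightarrow> (real \<Rightarrow> real) \<Rightarrow> real \<Rightarrow> real" where
  "Hm fY p x = lap fY x * (lap (\<lambda>t. t * p t) x / lap (\<lambda>t. t * fY t) x) - lap p x"

lemma convex_two_zeros:
  fixes e :: "real \<Rightarrow> real"
  assumes cv: "convex_on UNIV e" and ea: "e a = 0" and eb: "e b = 0" and ab: "a < b"
  shows "a \<le> t \<Longrightarrow> t \<le> b \<Longrightarrow> e t \<le> 0"
    and "t \<le> a \<Longrightarrow> e t \<ge> 0"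
    and "b \<le> t \<Longrightarrow> e t \<ge> 0"
proof -
  assume t: "a \<le> t" "t \<le> b"
  define l where "l = (t - a) / (b - a)"
  have l: "0 \<le> l" "l \<le> 1" using t ab unfolding l_def by (auto simp: field_simps)
  have "l * (b - a) = t - a" using ab unfolding l_def by simp
  then have "(1 - l) *\<^sub>R a + l *\<^sub>R b = t" by (simp add: algebra_simps)
  then show "e t \<le> 0" using convex_onD[OF cv l, of a b] ea eb by simp
next
  assume t: "t \<le> a"
  show "e t \<ge> 0"
  proof (cases "t = a")
    case True then show ?thesis using ea by simp
  next
    case False
    then have t': "t < a" using t by simp
    define l where "l = (a - t) / (b - t)"
    have l: "0 \<le> l" "l \<le> 1" "l < 1" using t' ab unfolding l_def by (auto simp: field_simps)
    have "l * (b - t) = a - t" using ab t' unfolding l_def by simp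
    then have "(1 - l) *\<^sub>R t + l *\<^sub>R b = a" by (simp add: algebra_simps)
    then have "0 \<le> (1 - l) * e t" using convex_onD[OF cv l(1,2), of t b] ea eb by simp
    then show ?thesis using l(3) by (simp add: zero_le_mult_iff)
  qed
next
  assume t: "b \<le> t"
  show "e t \<ge> 0"
  proof (cases "t = b")
    case True then show ?thesis using eb by simp
  next
    case False
    then have t': "b < t" using t by simp
    define l where "l = (b - a) / (t - a)"
    have l: "0 \<le> l" "l \<le> 1" "0 < l" using t' ab unfolding l_def by (auto simp: field_simps)
    have "l * (t - a) = b - a" using ab t' unfolding l_def by simp
    then have "(1 - l) *\<^sub>R a + l *\<^sub>R t = b" by (simp add: algebra_simps)
    then have "0 \<le> l * e t" using convex_onD[OF cv l(1,2), of a t] ea eb by simp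
    then show ?thesis using l(3) by (simp add: zero_le_mult_iff)
  qed
qed

lemma three_weight:
  fixes x1 x2 x3 a b :: real
  assumes x: "x1 < x2" "x2 < x3" and ab: "0 < a" "a < b"
  shows "\<exists>\<alpha> \<beta>. \<alpha> > 0 \<and> \<beta> > 0 \<and>
    (\<forall>t. (t \<le> a \<or> b \<le> t \<longrightarrow> \<alpha> * exp (- t * x1) - exp (- t * x2) + \<beta> * exp (- t * x3) \<ge> 0) \<and>
         (a \<le> t \<and> t \<le> b \<longrightarrow> \<alpha> * exp (- t * x1) - exp (- t * x2) + \<beta> * exp (- t * x3) \<le> 0))"
proof -
  define u where "u = x2 - x1"
  define v where "v = x3 - x2"
  have u: "u > 0" and v: "v > 0" using x unfolding u_def v_def by auto
  define det where "det = exp (a * u - b * v) - exp (b * u - a * v)"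
  have "a * u - b * v < b * u - a * v"
  proof -
    have "(b - a) * (u + v) > 0" using ab u v by simp
    then show ?thesis by (simp add: algebra_simps)
  qed
  then have det: "det < 0" unfolding det_def by simp
  define \<alpha> where "\<alpha> = (exp (- b * v) - exp (- a * v)) / det"
  define \<beta> where "\<beta> = (exp (a * u) - exp (b * u)) / det"
  have "exp (- b * v) < exp (- a * v)" using ab v by simp
  then have \<alpha>: "\<alpha> > 0" unfolding \<alpha>_def using det by (simp add: divide_neg_neg)
  have "exp (a * u) < exp (b * u)" using ab u by simp
  then have \<beta>: "\<beta> > 0" unfolding \<beta>_def using det by (simp add: divide_neg_neg)
  define e where "e t = \<alpha> * exp (t * u) + \<beta> * exp (- t * v) - 1" for t
  have cv: "convex_on UNIV e"
  proof (rule convex_on_realI[where f' = "\<lambda>t. \<alpha> * u * exp (t * u) - \<beta> * v * exp (- t * v)"])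
    show "connected (UNIV :: real set)" by simp
    fix t :: real
    show "(e has_real_derivative \<alpha> * u * exp (t * u) - \<beta> * v * exp (- t * v)) (at t)"
      unfolding e_def by (auto intro!: derivative_eq_intros)
  next
    fix t y :: real assume "t \<le> y"
    then have "exp (t * u) \<le> exp (y * u)" "exp (- y * v) \<le> exp (- t * v)"
      using u v by (auto intro: mult_right_mono)
    then have "\<alpha> * u * exp (t * u) \<le> \<alpha> * u * exp (y * u)" "\<beta> * v * exp (- y * v) \<le> \<beta> * v * exp (- t * v)"
      using \<alpha> \<beta> u v by (auto intro!: mult_left_mono)
    then show "\<alpha> * u * exp (t * u) - \<beta> * v * exp (- t * v) \<le> \<alpha> * u * exp (y * u) - \<beta> * v * exp (- y * v)"
      by simp
  qed
  have ea: "e a = 0"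
  proof -
    have n: "(exp (- b * v) - exp (- a * v)) * exp (a * u) + (exp (a * u) - exp (b * u)) * exp (- a * v) = det"
      unfolding det_def by (simp add: algebra_simps flip: exp_add)
    have "\<alpha> * exp (a * u) + \<beta> * exp (- a * v) = ((exp (- b * v) - exp (- a * v)) * exp (a * u) + (exp (a * u) - exp (b * u)) * exp (- a * v)) / det"
      unfolding \<alpha>_def \<beta>_def by (simp add: add_divide_distrib)
    also have "\<dots> = 1" unfolding n using det by simp
    finally have "\<alpha> * exp (a * u) + \<beta> * exp (- a * v) = 1" .
    then show ?thesis unfolding e_def by simp
  qed
  have eb: "e b = 0"
  proof -
    have n: "(exp (- b * v) - exp (- a * v)) * exp (b * u) + (exp (a * u) - exp (b * u)) * exp (- b * v) = det"
      unfolding det_def by (simp add: algebra_simps flip: exp_add)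
    have "\<alpha> * exp (b * u) + \<beta> * exp (- b * v) = ((exp (- b * v) - exp (- a * v)) * exp (b * u) + (exp (a * u) - exp (b * u)) * exp (- b * v)) / det"
      unfolding \<alpha>_def \<beta>_def by (simp add: add_divide_distrib)
    also have "\<dots> = 1" unfolding n using det by simp
    finally have "\<alpha> * exp (b * u) + \<beta> * exp (- b * v) = 1" .
    then show ?thesis unfolding e_def by simp
  qed
  have we: "\<alpha> * exp (- t * x1) - exp (- t * x2) + \<beta> * exp (- t * x3) = exp (- t * x2) * e t" for t
    unfolding e_def u_def v_def by (simp add: algebra_simps flip: exp_add)
  show ?thesis
  proof (intro exI conjI allI impI)
    fix t assume "t \<le> a \<or> b \<le> t"
    then have "e t \<ge> 0" using convex_two_zeros[OF cv ea eb ab(2)] by auto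
    then show "\<alpha> * exp (- t * x1) - exp (- t * x2) + \<beta> * exp (- t * x3) \<ge> 0" unfolding we by simp
  next
    fix t assume "a \<le> t \<and> t \<le> b"
    then have "e t \<le> 0" using convex_two_zeros[OF cv ea eb ab(2)] by auto
    then show "\<alpha> * exp (- t * x1) - exp (- t * x2) + \<beta> * exp (- t * x3) \<le> 0" unfolding we
      by (simp add: mult_nonneg_nonpos)
  qed (use \<alpha> \<beta> in auto)
qed

lemma sgn_prod: "(y \<le> 0 \<and> w \<ge> 0) \<or> (y \<ge> 0 \<and> w \<le> 0) \<Longrightarrow> y * w \<le> (0::real)"
  by (auto simp: mult_nonpos_nonneg mult_nonneg_nonpos)

lemma left_pattern:
  fixes r :: "real \<Rightarrow> real"
  assumes s: "s > 0" and r: "mono_on {0<..<s} r"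
  shows "\<exists>a. 0 \<le> a \<and> a \<le> s \<and> (\<forall>t. 0 < t \<and> t < a \<longrightarrow> r t \<le> c) \<and> (\<forall>t. a < t \<and> t < s \<longrightarrow> r t \<ge> c)"
proof (cases "{t. 0 < t \<and> t < s \<and> r t < c} = {}")
  case True
  then show ?thesis by (intro exI[of _ "0::real"]) (use s in force)
next
  case ne: False
  define A where "A = {t. 0 < t \<and> t < s \<and> r t < c}"
  have Ane: "A \<noteq> {}" using ne unfolding A_def .
  have bdd: "bdd_above A" unfolding A_def bdd_above_def by (intro exI[of _ s]) auto
  define a where "a = Sup A"
  have a0: "0 \<le> a"
  proof -
    obtain t where "t \<in> A" using Ane by blast
    then have "t \<le> a" unfolding a_def using cSup_upper[OF _ bdd] by blast
    then show ?thesis using \<open>t \<in> A\<close> unfolding A_def by simp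
  qed
  have as: "a \<le> s" unfolding a_def by (rule cSup_least[OF Ane]) (auto simp: A_def)
  show ?thesis
  proof (intro exI[of _ a] conjI allI impI a0 as)
    fix t assume t: "0 < t \<and> t < a"
    then obtain t' where t': "t' \<in> A" "t < t'" using less_cSup_iff[OF Ane bdd] unfolding a_def by blast
    then have "r t \<le> r t'" using mono_onD[OF r] t as by (auto simp: A_def)
    then show "r t \<le> c" using t' by (auto simp: A_def)
  next
    fix t assume t: "a < t \<and> t < s"
    have "t \<notin> A"
    proof
      assume "t \<in> A"
      then have "t \<le> a" unfolding a_def using cSup_upper[OF _ bdd] by blast
      then show False using t by simp
    qed
    then show "r t \<ge> c" using t a0 by (auto simp: A_def)
  qed
qed

lemma right_pattern:
  fixes r :: "real \<Rightarrow> real"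
  assumes r: "antimono_on {s<..} r"
  shows "(\<forall>t>s. r t \<ge> c) \<or> (\<exists>b\<ge>s. (\<forall>t. s < t \<and> t < b \<longrightarrow> r t \<ge> c) \<and> (\<forall>t>b. r t \<le> c))"
proof (cases "{t. s < t \<and> r t < c} = {}")
  case True
  then show ?thesis by force
next
  case ne: False
  define B where "B = {t. s < t \<and> r t < c}"
  have Bne: "B \<noteq> {}" using ne unfolding B_def .
  have bdd: "bdd_below B" unfolding B_def bdd_below_def by (intro exI[of _ s]) auto
  define b where "b = Inf B"
  have bs: "s \<le> b" unfolding b_def by (rule cInf_greatest[OF Bne]) (auto simp: B_def)
  have "\<forall>t. s < t \<and> t < b \<longrightarrow> r t \<ge> c"
  proof (intro allI impI)
    fix t assume t: "s < t \<and> t < b"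
    have "t \<notin> B"
    proof
      assume "t \<in> B"
      then have "b \<le> t" unfolding b_def using cInf_lower[OF _ bdd] by blast
      then show False using t by simp
    qed
    then show "r t \<ge> c" using t by (auto simp: B_def)
  qed
  moreover have "\<forall>t>b. r t \<le> c"
  proof (intro allI impI)
    fix t assume t: "t > b"
    then obtain t' where t': "t' \<in> B" "t' < t" using cInf_less_iff[OF Bne bdd] unfolding b_def by blast
    then have "r t \<le> r t'" using monotone_onD[OF r, of t' t] by (auto simp: B_def)
    then show "r t \<le> c" using t' by (auto simp: B_def)
  qed
  ultimately show ?thesis using bs by blast
qed

lemma weight_exists:
  fixes r :: "real \<Rightarrow> real"
  assumes s: "s > 0" and r1: "mono_on {0<..<s} r" and r2: "antimono_on {s<..} r"
    and x: "0 < x1" "x1 < x2" "x2 < x3"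
  shows "\<exists>\<alpha> \<beta>. \<alpha> \<ge> 0 \<and> \<beta> \<ge> 0 \<and> (\<alpha> > 0 \<or> \<beta> > 0) \<and>
    (\<forall>t>0. t \<noteq> s \<longrightarrow> (r t - c) * (\<alpha> * exp (- t * x1) - exp (- t * x2) + \<beta> * exp (- t * x3)) \<le> 0)"
proof -
  obtain a where a: "0 \<le> a" "a \<le> s" "\<And>t. 0 < t \<Longrightarrow> t < a \<Longrightarrow> r t \<le> c" "\<And>t. a < t \<Longrightarrow> t < s \<Longrightarrow> r t \<ge> c"
    using left_pattern[OF s r1, of c] by blast
  from right_pattern[OF r2, of c] show ?thesis
  proof
    assume R: "\<forall>t>s. r t \<ge> c"
    define \<beta> where "\<beta> = exp (a * (x3 - x2))"
    have W: "- exp (- t * x2) + \<beta> * exp (- t * x3) = exp (- t * x2) * (exp ((a - t) * (x3 - x2)) - 1)" for t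
      unfolding \<beta>_def by (simp add: algebra_simps flip: exp_add)
    show ?thesis
    proof (rule exI[of _ "0::real"], rule exI[of _ \<beta>], intro conjI allI impI)
      fix t :: real assume t: "t > 0" "t \<noteq> s"
      have "(r t - c) * (- exp (- t * x2) + \<beta> * exp (- t * x3)) \<le> 0"
      proof (cases t a rule: linorder_cases)
        case less
        then have "exp ((a - t) * (x3 - x2)) \<ge> 1" using x by simp
        then show ?thesis unfolding W using a(3)[OF t(1) less] by (intro sgn_prod) simp
      next
        case equal
        then show ?thesis unfolding W by simp
      next
        case greater
        then have "exp ((a - t) * (x3 - x2)) \<le> 1" using x by (simp add: mult_nonpos_nonneg)
        moreover have "r t \<ge> c" using greater t a(4) R by (cases "t < s") auto
        ultimately show ?thesis unfolding W by (intro sgn_prod) (simp add: mult_nonneg_nonpos)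
      qed
      then show "(r t - c) * (0 * exp (- t * x1) - exp (- t * x2) + \<beta> * exp (- t * x3)) \<le> 0" by simp
    qed (auto simp: \<beta>_def)
  next
    assume "\<exists>b\<ge>s. (\<forall>t. s < t \<and> t < b \<longrightarrow> r t \<ge> c) \<and> (\<forall>t>b. r t \<le> c)"
    then obtain b where b: "s \<le> b" "\<And>t. s < t \<Longrightarrow> t < b \<Longrightarrow> r t \<ge> c" "\<And>t. t > b \<Longrightarrow> r t \<le> c" by blast
    consider "a = 0" | "0 < a" "a < b" | "0 < a" "a = b" using a b by linarith
    then show ?thesis
    proof cases
      case 1
      define \<alpha> where "\<alpha> = exp (- b * (x2 - x1))"
      have W: "\<alpha> * exp (- t * x1) - exp (- t * x2) = exp (- t * x2) * (exp ((t - b) * (x2 - x1)) - 1)" for t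
        unfolding \<alpha>_def by (simp add: algebra_simps flip: exp_add)
      show ?thesis
      proof (rule exI[of _ \<alpha>], rule exI[of _ "0::real"], intro conjI allI impI)
        fix t :: real assume t: "t > 0" "t \<noteq> s"
        have "(r t - c) * (\<alpha> * exp (- t * x1) - exp (- t * x2)) \<le> 0"
        proof (cases t b rule: linorder_cases)
          case less
          then have "exp ((t - b) * (x2 - x1)) \<le> 1" using x by (simp add: mult_nonpos_nonneg)
          moreover have "r t \<ge> c" using less t a(4) b(2) 1 by (cases "t < s") auto
          ultimately show ?thesis unfolding W by (intro sgn_prod) (simp add: mult_nonneg_nonpos)
        next
          case equal
          then show ?thesis unfolding W by simp
        next
          case greater
          then have "exp ((t - b) * (x2 - x1)) \<ge> 1" using x by simp
          then show ?thesis unfolding W using b(3)[OF greater] by (intro sgn_prod) simp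
        qed
        then show "(r t - c) * (\<alpha> * exp (- t * x1) - exp (- t * x2) + 0 * exp (- t * x3)) \<le> 0" by simp
      qed (auto simp: \<alpha>_def)
    next
      case 2
      obtain \<alpha> \<beta> where ab: "\<alpha> > 0" "\<beta> > 0"
        and W1: "\<And>t. t \<le> a \<or> b \<le> t \<Longrightarrow> \<alpha> * exp (- t * x1) - exp (- t * x2) + \<beta> * exp (- t * x3) \<ge> 0"
        and W2: "\<And>t. a \<le> t \<and> t \<le> b \<Longrightarrow> \<alpha> * exp (- t * x1) - exp (- t * x2) + \<beta> * exp (- t * x3) \<le> 0"
        using three_weight[OF x(2,3) 2] by blast
      show ?thesis
      proof (rule exI[of _ \<alpha>], rule exI[of _ \<beta>], intro conjI allI impI)
        fix t :: real assume t: "t > 0" "t \<noteq> s"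
        consider "t < a" | "t = a" | "a < t" "t < b" | "t = b" | "b < t" by linarith
        then show "(r t - c) * (\<alpha> * exp (- t * x1) - exp (- t * x2) + \<beta> * exp (- t * x3)) \<le> 0"
        proof cases
          case 1 then show ?thesis using a(3)[OF t(1) 1] W1[of t] by (intro sgn_prod) simp
        next
          case 2
          have "\<alpha> * exp (- t * x1) - exp (- t * x2) + \<beta> * exp (- t * x3) = 0"
            using W1[of t] W2[of t] 2 \<open>a < b\<close> by (intro antisym) auto
          then show ?thesis by simp
        next
          case 3
          have "r t \<ge> c" using 3 t a(4) b(2) by (cases "t < s") auto
          then show ?thesis using W2[of t] 3 by (intro sgn_prod) simp
        next
          case 4
          have "\<alpha> * exp (- t * x1) - exp (- t * x2) + \<beta> * exp (- t * x3) = 0"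
            using W1[of t] W2[of t] 4 \<open>a < b\<close> by (intro antisym) auto
          then show ?thesis by simp
        next
          case 5 then show ?thesis using b(3)[OF 5] W1[of t] by (intro sgn_prod) simp
        qed
      qed (use ab in auto)
    next
      case 3
      then have as: "a = s" "b = s" using a b by auto
      show ?thesis
      proof (rule exI[of _ "1::real"], rule exI[of _ "0::real"], intro conjI allI impI)
        fix t :: real assume t: "t > 0" "t \<noteq> s"
        have "exp (- t * x2) \<le> exp (- t * x1)" using t x by simp
        moreover have "r t \<le> c" using t a(3) b(3) as by (cases "t < s") auto
        ultimately show "(r t - c) * (1 * exp (- t * x1) - exp (- t * x2) + 0 * exp (- t * x3)) \<le> 0"
          by (intro sgn_prod) simp
      qed auto
    qed
  qed
qed

lemma exp_small:
  fixes d B e x0 :: real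
  assumes d: "d > 0" and B: "B \<ge> 0" and e: "e > 0"
  shows "\<exists>x\<ge>x0. exp (- d * (x - 1)) * B < e"
proof -
  define x where "x = max x0 (2 + ln ((B + 1) / e) / d)"
  have "x - 1 \<ge> 1 + ln ((B + 1) / e) / d" unfolding x_def by simp
  then have "d * (x - 1) \<ge> d * (1 + ln ((B + 1) / e) / d)" using d by (intro mult_left_mono) auto
  also have "d * (1 + ln ((B + 1) / e) / d) = d + ln ((B + 1) / e)" using d by (simp add: field_simps)
  finally have "d * (x - 1) \<ge> d + ln ((B + 1) / e)" .
  then have "- d * (x - 1) < - ln ((B + 1) / e)" using d by simp
  then have "exp (- d * (x - 1)) < exp (- ln ((B + 1) / e))" by simp
  also have "\<dots> = e / (B + 1)" using B e by (simp add: exp_minus exp_diff)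
  finally have 1: "exp (- d * (x - 1)) < e / (B + 1)" .
  have "exp (- d * (x - 1)) * B \<le> exp (- d * (x - 1)) * (B + 1)" by simp
  also have "\<dots> < e / (B + 1) * (B + 1)" using 1 B by (intro mult_strict_right_mono) auto
  also have "\<dots> = e" using B by simp
  finally show ?thesis unfolding x_def by (intro exI[of _ "max x0 (2 + ln ((B + 1) / e) / d)"]) auto
qed

lemma Lw_ind:
  assumes p: "Lw p" and A: "A \<in> sets borel"
  shows "Lw (\<lambda>t. indicator A t * p t)"
  unfolding Lw_def
proof (intro allI impI)
  fix x :: real assume x: "x > 0"
  have i: "set_integrable lborel {0<..} (\<lambda>t. p t * exp (- t * x))" using Lw_si[OF p x] .
  show "set_integrable lborel {0<..} (\<lambda>t. indicator A t * p t * exp (- t * x))"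
  proof (rule set_integrable_bound[OF i])
    have "set_borel_measurable lborel {0<..} (\<lambda>t. (p t * exp (- t * x)) * indicator A t)"
      by (rule sbm_mult[OF sbm_of_si[OF i]]) (use A in simp)
    then show "set_borel_measurable lborel {0<..} (\<lambda>t. indicator A t * p t * exp (- t * x))"
      by (simp add: mult_ac)
    show "AE t in lborel. t \<in> {0<..} \<longrightarrow> norm (indicator A t * p t * exp (- t * x)) \<le> norm (p t * exp (- t * x))"
      by (intro AE_I2) (auto simp: indicator_def abs_mult)
  qed
qed

context
  fixes fY :: "real \<Rightarrow> real"
  assumes LwY: "Lw fY" and posY: "\<forall>t>0. fY t > 0"
begin

lemma LY_pos: "x > 0 \<Longrightarrow> lap fY x > 0"
  using lap_pos[OF LwY posY] .

lemma MY_pos: "x > 0 \<Longrightarrow> lap (\<lambda>t. t * fY t) x > 0"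
  using lap_pos[OF Lw_t[OF LwY]] posY by simp

lemma H_fun_eq:
  assumes p: "Lw p" and x: "x > 0"
  shows "H_fun (lap p) (lap fY) x = Hm fY p x"
  unfolding H_fun_def Hm_def
  using DERIV_imp_deriv[OF lap_deriv[OF p x]] DERIV_imp_deriv[OF lap_deriv[OF LwY x]]
  by (simp add: mult.commute)

lemma Hm_nonneg_imp_antimono:
  assumes p: "Lw p" and H: "\<And>x. x > 0 \<Longrightarrow> Hm fY p x \<ge> 0"
  shows "antimono_on {0<..} (\<lambda>x. lap p x / lap fY x)"
proof (rule monotone_onI)
  fix x y :: real assume xy: "x \<in> {0<..}" "y \<in> {0<..}" "x \<le> y"
  show "lap p y / lap fY y \<le> lap p x / lap fY x"
  proof (rule DERIV_nonpos_imp_nonincreasing[OF xy(3)])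
    fix z assume z: "x \<le> z" "z \<le> y"
    then have z0: "z > 0" using xy by simp
    let ?D = "(- lap (\<lambda>t. t * p t) z * lap fY z - lap p z * (- lap (\<lambda>t. t * fY t) z)) / (lap fY z * lap fY z)"
    have "((\<lambda>x. lap p x / lap fY x) has_real_derivative ?D) (at z)"
      using DERIV_divide[OF lap_deriv[OF p z0] lap_deriv[OF LwY z0]] LY_pos[OF z0] by simp
    moreover have "?D \<le> 0"
    proof -
      have LY: "lap fY z > 0" and MY: "lap (\<lambda>t. t * fY t) z > 0" using LY_pos MY_pos z0 by auto
      have "- lap (\<lambda>t. t * p t) z * lap fY z - lap p z * (- lap (\<lambda>t. t * fY t) z)
          = - lap (\<lambda>t. t * fY t) z * Hm fY p z"
        unfolding Hm_def using MY by (simp add: field_simps)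
      also have "\<dots> \<le> 0" using H[OF z0] MY by simp
      finally show ?thesis using LY by (simp add: divide_nonpos_pos)
    qed
    ultimately show "\<exists>D. ((\<lambda>x. lap p x / lap fY x) has_real_derivative D) (at z) \<and> D \<le> 0" by blast
  qed
qed


lemma Hm_alt:
  assumes x: "x > 0" and c: "lap p x = c * lap fY x"
  shows "Hm fY p x = lap fY x / lap (\<lambda>t. t * fY t) x * (lap (\<lambda>t. t * p t) x - c * lap (\<lambda>t. t * fY t) x)"
  unfolding Hm_def using c MY_pos[OF x] by (simp add: field_simps)

lemma Inc:
  assumes p: "Lw p" and r: "mono_on {0<..} (\<lambda>t. p t / fY t)" and x: "x > 0"
  shows "Hm fY p x \<ge> 0"
proof -
  define c where "c = lap p x / lap fY x"
  have LY: "lap fY x > 0" using LY_pos[OF x] .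
  have cL: "lap p x = c * lap fY x" unfolding c_def using LY by simp
  define k where "k t = p t - c * fY t" for t
  have Lwk: "Lw k" unfolding k_def by (intro Lw_diff Lw_cmult p LwY)
  have Lwtk: "Lw (\<lambda>t. t * k t)" by (rule Lw_t[OF Lwk])
  have phi: "lap k x = 0" unfolding k_def using lap_diff[OF p Lw_cmult[OF LwY] x] lap_cmult cL by simp
  have psi: "lap (\<lambda>t. t * k t) x = lap (\<lambda>t. t * p t) x - c * lap (\<lambda>t. t * fY t) x"
  proof -
    have "lap (\<lambda>t. t * k t) x = lap (\<lambda>t. t * p t - c * (t * fY t)) x"
      unfolding k_def by (intro lap_cong) (simp add: algebra_simps)
    also have "\<dots> = lap (\<lambda>t. t * p t) x - c * lap (\<lambda>t. t * fY t) x"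
      using lap_diff[OF Lw_t[OF p] Lw_cmult[OF Lw_t[OF LwY]] x] lap_cmult by simp
    finally show ?thesis .
  qed
  have ksign: "k t = fY t * (p t / fY t - c)" if "t > 0" for t
  proof -
    have "fY t \<noteq> 0" using posY that by (metis less_irrefl)
    then show ?thesis unfolding k_def by (simp add: field_simps)
  qed
  define A where "A = {t. t > 0 \<and> p t / fY t < c}"
  have "lap (\<lambda>t. t * k t) x \<ge> 0"
  proof (cases "A = {}")
    case True
    have "k t \<ge> 0" if t: "t > 0" for t
    proof -
      have "p t / fY t \<ge> c" using True t unfolding A_def by auto
      moreover have "fY t > 0" using posY t by auto
      ultimately show ?thesis using ksign[OF t] by simp
    qed
    then show ?thesis unfolding lap_def by (intro si_nonneg) auto
  next
    case Ane: False
    show ?thesis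
    proof (cases "bdd_above A")
      case bdd: True
      define a where "a = Sup A"
      have ka: "k t * (t - a) \<ge> 0" if t: "t > 0" for t
      proof (cases "t < a")
        case True
        then obtain t' where t': "t' \<in> A" "t < t'" using less_cSup_iff[OF Ane bdd] unfolding a_def by blast
        then have "p t / fY t \<le> p t' / fY t'" using mono_onD[OF r] t by (auto simp: A_def)
        then have "p t / fY t < c" using t' by (auto simp: A_def)
        then have "k t \<le> 0" using ksign[OF t] posY[rule_format, OF t] by (simp add: mult_nonneg_nonpos)
        then show ?thesis using True by (simp add: mult_nonpos_nonpos)
      next
        case False
        have "t \<notin> A \<or> t = a"
        proof (rule ccontr)
          assume "\<not> (t \<notin> A \<or> t = a)"
          then have "t \<in> A" "t \<noteq> a" by auto
          then have "t \<le> a" unfolding a_def using cSup_upper[OF _ bdd] by blast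
          then show False using False \<open>t \<noteq> a\<close> by simp
        qed
        then show ?thesis
        proof
          assume "t \<notin> A"
          then have "p t / fY t \<ge> c" using t by (auto simp: A_def)
          then have "k t \<ge> 0" using ksign[OF t] posY[rule_format, OF t] by simp
          then show ?thesis using False by simp
        qed simp
      qed
      have "lap (\<lambda>t. k t * (t - a)) x \<ge> 0"
        unfolding lap_def using ka by (intro si_nonneg) auto
      also have "lap (\<lambda>t. k t * (t - a)) x = lap (\<lambda>t. t * k t) x - a * lap k x"
      proof -
        have "lap (\<lambda>t. k t * (t - a)) x = lap (\<lambda>t. t * k t - a * k t) x"
          by (intro lap_cong) (simp add: algebra_simps)
        also have "\<dots> = lap (\<lambda>t. t * k t) x - a * lap k x"
          using lap_diff[OF Lwtk Lw_cmult[OF Lwk] x] lap_cmult by simp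
        finally show ?thesis .
      qed
      finally show ?thesis using phi by simp
    next
      case nbdd: False
      have "k t < 0" if t: "t > 0" for t
      proof -
        obtain t' where t': "t' \<in> A" "t < t'" using nbdd unfolding bdd_above_def
          by (meson linorder_not_le)
        then have "p t / fY t \<le> p t' / fY t'" using mono_onD[OF r] t by (auto simp: A_def)
        then have "p t / fY t < c" using t' by (auto simp: A_def)
        then show "k t < 0" using ksign[OF t] posY[rule_format, OF t] by (simp add: mult_pos_neg)
      qed
      then have "lap (\<lambda>t. - k t) x > 0"
        by (intro lap_pos[OF Lw_minus[OF Lwk] _ x]) auto
      then show ?thesis using phi lap_minus[of k x] by simp
    qed
  qed
  then show ?thesis
    using Hm_alt[OF x cL] psi LY MY_pos[OF x] by simp
qed


lemma NoValley:
  assumes p: "Lw p" and s: "s > 0" and r1: "mono_on {0<..<s} (\<lambda>t. p t / fY t)"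
    and r2: "antimono_on {s<..} (\<lambda>t. p t / fY t)"
    and x: "0 < x1" "x1 < x2" "x2 < x3"
    and v1: "lap (\<lambda>t. t * p t) x2 / lap (\<lambda>t. t * fY t) x2 < lap (\<lambda>t. t * p t) x1 / lap (\<lambda>t. t * fY t) x1"
    and v3: "lap (\<lambda>t. t * p t) x2 / lap (\<lambda>t. t * fY t) x2 < lap (\<lambda>t. t * p t) x3 / lap (\<lambda>t. t * fY t) x3"
  shows False
proof -
  define c where "c = lap (\<lambda>t. t * p t) x2 / lap (\<lambda>t. t * fY t) x2"
  define k where "k t = t * p t - c * (t * fY t)" for t
  have Lwk: "Lw k" unfolding k_def by (intro Lw_diff Lw_cmult Lw_t p LwY)
  have psi: "lap k y = lap (\<lambda>t. t * p t) y - c * lap (\<lambda>t. t * fY t) y" if "y > 0" for y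
    unfolding k_def using lap_diff[OF Lw_t[OF p] Lw_cmult[OF Lw_t[OF LwY]] that] lap_cmult by simp
  have x2': "x2 > 0" "x3 > 0" using x by auto
  have psi2: "lap k x2 = 0" using psi[OF x2'(1)] MY_pos[OF x2'(1)] unfolding c_def by simp
  have psi1: "lap k x1 > 0"
  proof -
    have "c < lap (\<lambda>t. t * p t) x1 / lap (\<lambda>t. t * fY t) x1" using v1 unfolding c_def .
    then have "c * lap (\<lambda>t. t * fY t) x1 < lap (\<lambda>t. t * p t) x1" using MY_pos[OF x(1)] by (simp add: field_simps)
    then show ?thesis using psi[OF x(1)] by simp
  qed
  have psi3: "lap k x3 > 0"
  proof -
    have "c < lap (\<lambda>t. t * p t) x3 / lap (\<lambda>t. t * fY t) x3" using v3 unfolding c_def .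
    then have "c * lap (\<lambda>t. t * fY t) x3 < lap (\<lambda>t. t * p t) x3" using MY_pos[OF x2'(2)] by (simp add: field_simps)
    then show ?thesis using psi[OF x2'(2)] by simp
  qed
  obtain \<alpha> \<beta> where ab: "\<alpha> \<ge> 0" "\<beta> \<ge> 0" "\<alpha> > 0 \<or> \<beta> > 0"
    and W: "\<And>t. t > 0 \<Longrightarrow> t \<noteq> s \<Longrightarrow> (p t / fY t - c) * (\<alpha> * exp (- t * x1) - exp (- t * x2) + \<beta> * exp (- t * x3)) \<le> 0"
    using weight_exists[OF s r1 r2 x, of c] by blast
  define F where "F t = \<alpha> * (k t * exp (- t * x1)) - k t * exp (- t * x2) + \<beta> * (k t * exp (- t * x3))" for t
  have I1: "set_integrable lborel {0<..} (\<lambda>t. \<alpha> * (k t * exp (- t * x1)))" using Lw_si[OF Lwk x(1)] by simp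
  have I2: "set_integrable lborel {0<..} (\<lambda>t. k t * exp (- t * x2))" using Lw_si[OF Lwk x2'(1)] .
  have I3: "set_integrable lborel {0<..} (\<lambda>t. \<beta> * (k t * exp (- t * x3)))" using Lw_si[OF Lwk x2'(2)] by simp
  have IF: "set_integrable lborel {0<..} F" unfolding F_def using I1 I2 I3 by (intro set_integral_add set_integral_diff) auto
  have "(LBINT t:{0<..}. F t) = \<alpha> * lap k x1 - lap k x2 + \<beta> * lap k x3"
    unfolding F_def lap_def using I1 I2 I3 by (simp add: set_integral_add set_integral_diff)
  also have "\<dots> > 0" using psi1 psi2 psi3 ab
    by (auto intro: add_pos_nonneg add_nonneg_pos simp: mult_pos_pos)
  finally have pos: "(LBINT t:{0<..}. F t) > 0" .
  have "AE t\<in>{0<..} in lborel. F t \<le> 0"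
    using AE_lborel_singleton[of s]
  proof (rule eventually_mono)
    fix t :: real assume ts: "t \<noteq> s"
    show "t \<in> {0<..} \<longrightarrow> F t \<le> 0"
    proof
      assume "t \<in> {0<..}"
      then have t: "t > 0" by simp
      have fy: "fY t > 0" using posY t by auto
      have "F t = (t * fY t) * ((p t / fY t - c) * (\<alpha> * exp (- t * x1) - exp (- t * x2) + \<beta> * exp (- t * x3)))"
        unfolding F_def k_def using fy by (simp add: field_simps)
      also have "\<dots> \<le> 0" by (rule mult_nonneg_nonpos[OF _ W[OF t ts]]) (use t fy in simp)
      finally show "F t \<le> 0" .
    qed
  qed
  moreover have I0: "set_integrable lborel {0<..} (\<lambda>_. 0::real)" by (simp add: set_integrable_def)
  ultimately have "(LBINT t:{0<..}. F t) \<le> 0"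
    using set_integral_mono_AE[OF IF I0] by simp
  then show False using pos by simp
qed


lemma NoHValley:
  assumes p: "Lw p" and s: "s > 0" and r1: "mono_on {0<..<s} (\<lambda>t. p t / fY t)"
    and r2: "antimono_on {s<..} (\<lambda>t. p t / fY t)"
    and x: "0 < x1" "x1 < x2" "x2 < x3"
    and v1: "Hm fY p x2 < Hm fY p x1" and v3: "Hm fY p x2 < Hm fY p x3"
  shows False
proof -
  define q where "q x = lap (\<lambda>t. t * p t) x / lap (\<lambda>t. t * fY t) x" for x
  define Dq where "Dq z = (- lap (\<lambda>t. t * (t * p t)) z * lap (\<lambda>t. t * fY t) z
       - lap (\<lambda>t. t * p t) z * (- lap (\<lambda>t. t * (t * fY t)) z)) / (lap (\<lambda>t. t * fY t) z * lap (\<lambda>t. t * fY t) z)" for z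
  have dq: "(q has_real_derivative Dq z) (at z)" if z: "z > 0" for z
    unfolding q_def Dq_def
    by (rule DERIV_divide[OF lap_deriv[OF Lw_t[OF p] z] lap_deriv[OF Lw_t[OF LwY] z]])
       (use MY_pos[OF z] in simp)
  have Hq: "Hm fY p = (\<lambda>x. lap fY x * q x - lap p x)"
    unfolding Hm_def q_def by (rule ext) simp
  have dH: "(Hm fY p has_real_derivative lap fY z * Dq z) (at z)" if z: "z > 0" for z
  proof -
    have "((\<lambda>x. lap fY x * q x - lap p x) has_real_derivative
        (- lap (\<lambda>t. t * fY t) z) * q z + Dq z * lap fY z - (- lap (\<lambda>t. t * p t) z)) (at z)"
      by (rule DERIV_diff[OF DERIV_mult[OF lap_deriv[OF LwY z] dq[OF z]] lap_deriv[OF p z]])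
    moreover have "(- lap (\<lambda>t. t * fY t) z) * q z + Dq z * lap fY z - (- lap (\<lambda>t. t * p t) z) = lap fY z * Dq z"
      unfolding q_def using MY_pos[OF z] by simp
    ultimately show ?thesis unfolding Hq by (simp add: mult.commute)
  qed
  let ?H = "Hm fY p"
  have contH: "continuous_on {x1..x3} ?H"
  proof (rule continuous_at_imp_continuous_on, intro ballI)
    fix y assume "y \<in> {x1..x3}"
    then have "y > 0" using x by auto
    then show "isCont ?H y" using DERIV_isCont[OF dH] by blast
  qed
  obtain m where m: "m \<in> {x1..x3}" "\<And>y. y \<in> {x1..x3} \<Longrightarrow> ?H m \<le> ?H y"
    using continuous_attains_inf[OF compact_Icc _ contH] x by auto
  have "?H m \<le> ?H x2" using m x by auto
  then have m1: "?H m < ?H x1" and m3: "?H m < ?H x3" using v1 v3 by auto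
  then have mx: "x1 < m" "m < x3" using m(1) by (auto simp: less_eq_real_def)
  obtain z1 where z1: "x1 < z1" "z1 < m" "?H m - ?H x1 = (m - x1) * (lap fY z1 * Dq z1)"
    using MVT2[OF mx(1), of ?H "\<lambda>z. lap fY z * Dq z"] dH x by force
  obtain z3 where z3: "m < z3" "z3 < x3" "?H x3 - ?H m = (x3 - m) * (lap fY z3 * Dq z3)"
    using MVT2[OF mx(2), of ?H "\<lambda>z. lap fY z * Dq z"] dH x mx by force
  have z0: "z1 > 0" "z3 > 0" using z1 z3 x by auto
  have "(m - x1) * (lap fY z1 * Dq z1) < 0" using z1(3) m1 by simp
  then have "lap fY z1 * Dq z1 < 0" using mx by (simp add: mult_less_0_iff)
  then have D1: "Dq z1 < 0" using LY_pos[OF z0(1)] by (simp add: mult_less_0_iff)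
  have "(x3 - m) * (lap fY z3 * Dq z3) > 0" using z3(3) m3 by simp
  then have "lap fY z3 * Dq z3 > 0" using mx by (simp add: zero_less_mult_iff)
  then have D3: "Dq z3 > 0" using LY_pos[OF z0(2)] by (simp add: zero_less_mult_iff)
  have z13: "z1 < z3" using z1 z3 by simp
  have contq: "continuous_on {z1..z3} q"
  proof (rule continuous_at_imp_continuous_on, intro ballI)
    fix y assume "y \<in> {z1..z3}"
    then have "y > 0" using z0 by auto
    then show "isCont q y" using DERIV_isCont[OF dq] by blast
  qed
  obtain u where u: "u \<in> {z1..z3}" "\<And>y. y \<in> {z1..z3} \<Longrightarrow> q u \<le> q y"
    using continuous_attains_inf[OF compact_Icc _ contq] z13 by auto
  obtain d1 where d1: "d1 > 0" "\<And>h. h > 0 \<Longrightarrow> h < d1 \<Longrightarrow> q z1 > q (z1 + h)"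
    using DERIV_neg_dec_right[OF dq[OF z0(1)] D1] by blast
  obtain d3 where d3: "d3 > 0" "\<And>h. h > 0 \<Longrightarrow> h < d3 \<Longrightarrow> q (z3 - h) < q z3"
    using DERIV_pos_inc_left[OF dq[OF z0(2)] D3] by blast
  define h1 where "h1 = min (d1/2) (z3 - z1)"
  have h1: "h1 > 0" "h1 < d1" "z1 + h1 \<in> {z1..z3}" using d1 z13 unfolding h1_def by auto
  have qu1: "q u < q z1" using u(2)[OF h1(3)] d1(2)[OF h1(1,2)] by simp
  define h3 where "h3 = min (d3/2) (z3 - z1)"
  have h3: "h3 > 0" "h3 < d3" "z3 - h3 \<in> {z1..z3}" using d3 z13 unfolding h3_def by auto
  have qu3: "q u < q z3" using u(2)[OF h3(3)] d3(2)[OF h3(1,2)] by simp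
  have "z1 < u" "u < z3" using u(1) qu1 qu3 by (auto simp: less_eq_real_def)
  then show False
    using NoValley[OF p s r1 r2 z0(1) _ _ qu1[unfolded q_def] qu3[unfolded q_def]] by blast
qed


lemma lap_tail_bound:
  assumes p: "Lw p" and d: "\<delta> > 0" and z: "\<And>t. 0 < t \<Longrightarrow> t < \<delta> \<Longrightarrow> p t = 0" and x: "x \<ge> 1"
  shows "\<bar>lap p x\<bar> \<le> exp (- \<delta> * (x - 1)) * lap (\<lambda>t. \<bar>p t\<bar>) 1"
proof -
  have x0: "x > 0" using x by simp
  have I: "set_integrable lborel {0<..} (\<lambda>t. p t * exp (- t * x))" using Lw_si[OF p x0] .
  have "\<bar>lap p x\<bar> \<le> (LBINT t:{0<..}. \<bar>p t * exp (- t * x)\<bar>)"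
    unfolding lap_def using set_integral_norm_bound[OF I] by simp
  also have "\<dots> \<le> (LBINT t:{0<..}. exp (- \<delta> * (x - 1)) * (\<bar>p t\<bar> * exp (- t * 1)))"
  proof (rule set_integral_mono)
    show "set_integrable lborel {0<..} (\<lambda>t. \<bar>p t * exp (- t * x)\<bar>)" using set_integrable_abs[OF I] .
    show "set_integrable lborel {0<..} (\<lambda>t. exp (- \<delta> * (x - 1)) * (\<bar>p t\<bar> * exp (- t * 1)))"
      using Lw_si[OF Lw_abs[OF p], of 1] by simp
    fix t :: real assume "t \<in> {0<..}"
    then have t: "t > 0" by simp
    show "\<bar>p t * exp (- t * x)\<bar> \<le> exp (- \<delta> * (x - 1)) * (\<bar>p t\<bar> * exp (- t * 1))"
    proof (cases "t < \<delta>")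
      case True then show ?thesis using z[OF t True] by simp
    next
      case False
      then have "\<delta> * (x - 1) \<le> t * (x - 1)" using x by (intro mult_right_mono) auto
      then have "exp (- t * x) \<le> exp (- \<delta> * (x - 1)) * exp (- t * 1)"
        by (simp add: algebra_simps flip: exp_add)
      then have "\<bar>p t\<bar> * exp (- t * x) \<le> \<bar>p t\<bar> * (exp (- \<delta> * (x - 1)) * exp (- t * 1))"
        by (intro mult_left_mono) auto
      then show ?thesis by (simp add: abs_mult mult_ac)
    qed
  qed
  also have "\<dots> = exp (- \<delta> * (x - 1)) * lap (\<lambda>t. \<bar>p t\<bar>) 1"
    unfolding lap_def by simp
  finally show ?thesis .
qed

lemma MY_lower:
  assumes d: "\<delta> > 0" and x: "x \<ge> 1"
  shows "lap (\<lambda>t. t * fY t) x \<ge> exp (- \<delta> * (x - 1)) * lap (\<lambda>t. indicator {..<\<delta>} t * (t * fY t)) 1"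
proof -
  have x0: "x > 0" using x by simp
  have "exp (- \<delta> * (x - 1)) * lap (\<lambda>t. indicator {..<\<delta>} t * (t * fY t)) 1
      = (LBINT t:{0<..}. exp (- \<delta> * (x - 1)) * (indicator {..<\<delta>} t * (t * fY t) * exp (- t * 1)))"
    unfolding lap_def by simp
  also have "\<dots> \<le> lap (\<lambda>t. t * fY t) x"
    unfolding lap_def
  proof (rule set_integral_mono)
    show "set_integrable lborel {0<..} (\<lambda>t. exp (- \<delta> * (x - 1)) * (indicator {..<\<delta>} t * (t * fY t) * exp (- t * 1)))"
      using Lw_si[OF Lw_ind[OF Lw_t[OF LwY], of "{..<\<delta>}"], of 1] by simp
    show "set_integrable lborel {0<..} (\<lambda>t. t * fY t * exp (- t * x))"
      using Lw_si[OF Lw_t[OF LwY] x0] .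
    fix t :: real assume "t \<in> {0<..}"
    then have t: "t > 0" by simp
    have fy: "fY t > 0" using posY t by auto
    show "exp (- \<delta> * (x - 1)) * (indicator {..<\<delta>} t * (t * fY t) * exp (- t * 1)) \<le> t * fY t * exp (- t * x)"
    proof (cases "t < \<delta>")
      case True
      then have "t * (x - 1) \<le> \<delta> * (x - 1)" using x by (intro mult_right_mono) auto
      then have "exp (- \<delta> * (x - 1)) * exp (- t * 1) \<le> exp (- t * x)"
        by (simp add: algebra_simps flip: exp_add)
      then have "(t * fY t) * (exp (- \<delta> * (x - 1)) * exp (- t * 1)) \<le> (t * fY t) * exp (- t * x)"
        using t fy by (intro mult_left_mono) auto
      then show ?thesis using True by (simp add: mult_ac)
    next
      case False then show ?thesis using t fy by simp
    qed
  qed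
  finally show ?thesis .
qed

lemma LY_le: "x \<ge> 1 \<Longrightarrow> lap fY x \<le> lap fY 1"
  unfolding lap_def
proof (rule set_integral_mono)
  assume x: "x \<ge> 1"
  show "set_integrable lborel {0<..} (\<lambda>t. fY t * exp (- t * x))" using Lw_si[OF LwY] x by simp
  show "set_integrable lborel {0<..} (\<lambda>t. fY t * exp (- t * 1))" using Lw_si[OF LwY, of 1] by simp
  fix t :: real assume "t \<in> {0<..}"
  then have t: "t > 0" by simp
  then have "exp (- t * x) \<le> exp (- t * 1)" using x by simp
  then show "fY t * exp (- t * x) \<le> fY t * exp (- t * 1)" using posY t by (intro mult_left_mono) auto
qed

lemma Hm_add:
  assumes f: "Lw f" and g: "Lw g" and x: "x > 0"
  shows "Hm fY (\<lambda>t. f t + g t) x = Hm fY f x + Hm fY g x"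
proof -
  have "lap (\<lambda>t. t * (f t + g t)) x = lap (\<lambda>t. t * f t + t * g t) x"
    by (intro lap_cong) (simp add: algebra_simps)
  also have "\<dots> = lap (\<lambda>t. t * f t) x + lap (\<lambda>t. t * g t) x"
    by (rule lap_add[OF Lw_t[OF f] Lw_t[OF g] x])
  finally show ?thesis
    unfolding Hm_def using lap_add[OF f g x] by (simp add: add_divide_distrib algebra_simps)
qed


lemma Hm_large:
  assumes p: "Lw p" and s: "s > 0" and r1: "mono_on {0<..<s} (\<lambda>t. p t / fY t)" and m: "m < 0"
  shows "\<exists>x\<ge>x0. x > 0 \<and> Hm fY p x > m"
proof -
  define \<delta> where "\<delta> = s / 2"
  have d: "\<delta> > 0" "\<delta> < s" using s unfolding \<delta>_def by auto
  define r\<delta> where "r\<delta> = p \<delta> / fY \<delta>"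
  define pa where "pa t = indicator {..<\<delta>} t * p t + indicator {\<delta>..} t * (r\<delta> * fY t)" for t
  define pb where "pb t = indicator {\<delta>..} t * (p t - r\<delta> * fY t)" for t
  have Lwa: "Lw pa" unfolding pa_def by (intro Lw_add Lw_ind Lw_cmult p LwY) auto
  have Lwb: "Lw pb" unfolding pb_def by (intro Lw_ind Lw_diff Lw_cmult p LwY) auto
  have pab: "p = (\<lambda>t. pa t + pb t)" unfolding pa_def pb_def by (rule ext) (simp add: indicator_def)
  have Hsplit: "Hm fY p x = Hm fY pa x + Hm fY pb x" if "x > 0" for x
    using Hm_add[OF Lwa Lwb that] pab by simp
  have mono_a: "mono_on {0<..} (\<lambda>t. pa t / fY t)"
  proof (rule mono_onI)
    fix t t' :: real assume tt: "t \<in> {0<..}" "t' \<in> {0<..}" "t \<le> t'"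
    have fy: "fY t > 0" "fY t' > 0" using posY tt by auto
    have ra: "pa u / fY u = (if u < \<delta> then p u / fY u else r\<delta>)" if "fY u > 0" for u
      unfolding pa_def using that by (simp add: indicator_def)
    show "pa t / fY t \<le> pa t' / fY t'"
      unfolding ra[OF fy(1)] ra[OF fy(2)]
    proof (cases "t' < \<delta>")
      case True
      then show "(if t < \<delta> then p t / fY t else r\<delta>) \<le> (if t' < \<delta> then p t' / fY t' else r\<delta>)"
        using tt d mono_onD[OF r1, of t t'] by auto
    next
      case False
      then show "(if t < \<delta> then p t / fY t else r\<delta>) \<le> (if t' < \<delta> then p t' / fY t' else r\<delta>)"
        using tt d mono_onD[OF r1, of t \<delta>] unfolding r\<delta>_def by auto
    qed
  qed
  define K where "K = lap (\<lambda>t. indicator {..<\<delta>/2} t * (t * fY t)) 1"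
  have K: "K > 0" unfolding K_def lap_def
  proof (rule si_pos[of _ 0 "\<delta>/2"])
    show "set_integrable lborel {0<..} (\<lambda>t. indicator {..<\<delta>/2} t * (t * fY t) * exp (- t * 1))"
      using Lw_si[OF Lw_ind[OF Lw_t[OF LwY], of "{..<\<delta>/2}"], of 1] by simp
  qed (use d posY in \<open>auto simp: indicator_def\<close>)
  define A1 where "A1 = lap (\<lambda>t. \<bar>pb t\<bar>) 1"
  define A2 where "A2 = lap (\<lambda>t. \<bar>t * pb t\<bar>) 1"
  define L1 where "L1 = lap fY 1"
  have A1: "A1 \<ge> 0" unfolding A1_def by (intro lap_nonneg) auto
  have A2: "A2 \<ge> 0" unfolding A2_def by (intro lap_nonneg) auto
  have L1: "L1 \<ge> 0" using LY_pos[of 1] unfolding L1_def by simp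
  define B where "B = L1 * A2 / K + A1"
  have B: "B \<ge> 0" unfolding B_def using A1 A2 L1 K by simp
  obtain x where x: "x \<ge> max x0 1" "exp (- (\<delta>/2) * (x - 1)) * B < - m"
    using exp_small[of "\<delta>/2" B "- m" "max x0 1"] d B m by auto
  have x1: "x \<ge> 1" and xx0: "x \<ge> x0" and x0': "x > 0" using x(1) by auto
  define E where "E = exp (- (\<delta>/2) * (x - 1))"
  have E: "E > 0" "E \<le> 1" unfolding E_def using x1 d by (auto simp: mult_nonneg_nonneg)
  have EE: "exp (- \<delta> * (x - 1)) = E * E" unfolding E_def by (simp flip: exp_add)
  have b1: "\<bar>lap pb x\<bar> \<le> E * E * A1"
    using lap_tail_bound[OF Lwb d(1) _ x1] unfolding A1_def EE by (simp add: pb_def indicator_def)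
  have b2: "\<bar>lap (\<lambda>t. t * pb t) x\<bar> \<le> E * E * A2"
    using lap_tail_bound[OF Lw_t[OF Lwb] d(1) _ x1] unfolding A2_def EE by (simp add: pb_def indicator_def)
  have b3: "lap (\<lambda>t. t * fY t) x \<ge> E * K"
    using MY_lower[of "\<delta>/2" x] d x1 unfolding E_def K_def by simp
  have b4: "lap fY x \<le> L1" "lap fY x > 0" using LY_le[OF x1] LY_pos[OF x0'] unfolding L1_def by auto
  have "\<bar>lap fY x * (lap (\<lambda>t. t * pb t) x / lap (\<lambda>t. t * fY t) x)\<bar>
      = lap fY x * \<bar>lap (\<lambda>t. t * pb t) x\<bar> / lap (\<lambda>t. t * fY t) x"
    using b4 MY_pos[OF x0'] by (simp add: abs_mult)
  also have "\<dots> \<le> L1 * (E * E * A2) / (E * K)"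
    by (rule frac_le) (use b1 b2 b3 b4 E K L1 A2 in \<open>auto intro: mult_mono\<close>)
  also have "\<dots> = E * (L1 * A2 / K)" using E K by (simp add: field_simps)
  finally have b5: "\<bar>lap fY x * (lap (\<lambda>t. t * pb t) x / lap (\<lambda>t. t * fY t) x)\<bar> \<le> E * (L1 * A2 / K)" .
  have "E * A1 \<le> A1" using E A1 by (intro mult_left_le_one_le) auto
  then have "E * (E * A1) \<le> E * A1" using E by (intro mult_left_mono) auto
  then have "E * E * A1 \<le> E * A1" by (simp add: mult.assoc)
  moreover have "E * B = E * (L1 * A2 / K) + E * A1" unfolding B_def by (simp add: distrib_left)
  moreover have "Hm fY pb x = lap fY x * (lap (\<lambda>t. t * pb t) x / lap (\<lambda>t. t * fY t) x) - lap pb x"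
    unfolding Hm_def ..
  moreover have "- (E * (L1 * A2 / K)) \<le> lap fY x * (lap (\<lambda>t. t * pb t) x / lap (\<lambda>t. t * fY t) x)"
    using b5 by linarith
  moreover have "lap pb x \<le> E * E * A1" using b1 by linarith
  ultimately have "Hm fY pb x \<ge> - (E * B)" by linarith
  moreover have "E * B < - m" using x(2) unfolding E_def by (simp add: mult.commute)
  moreover have "Hm fY pa x \<ge> 0" by (rule Inc[OF Lwa mono_a x0'])
  ultimately have "Hm fY p x > m" using Hsplit[OF x0'] by simp
  then show ?thesis using xx0 x0' by blast
qed


lemma G1:
  assumes p: "Lw p" and r: "mono_on {0<..} (\<lambda>t. p t / fY t)"
  shows "antimono_on {0<..} (\<lambda>x. lap p x / lap fY x)"
  by (rule Hm_nonneg_imp_antimono[OF p Inc[OF p r]])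

lemma G2:
  assumes p: "Lw p" and s: "s > 0" and r1: "mono_on {0<..<s} (\<lambda>t. p t / fY t)"
    and r2: "antimono_on {s<..} (\<lambda>t. p t / fY t)"
    and H0: "\<And>m x0. m < 0 \<Longrightarrow> x0 > 0 \<Longrightarrow> \<exists>x1. 0 < x1 \<and> x1 < x0 \<and> Hm fY p x1 > m"
  shows "antimono_on {0<..} (\<lambda>x. lap p x / lap fY x)"
proof (rule Hm_nonneg_imp_antimono[OF p])
  fix x0 :: real assume x0: "x0 > 0"
  show "Hm fY p x0 \<ge> 0"
  proof (rule ccontr)
    assume "\<not> Hm fY p x0 \<ge> 0"
    then have m: "Hm fY p x0 < 0" by simp
    obtain x1 where x1: "0 < x1" "x1 < x0" "Hm fY p x1 > Hm fY p x0" using H0[OF m x0] by blast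
    obtain x3 where x3: "x3 \<ge> x0 + 1" "Hm fY p x3 > Hm fY p x0" using Hm_large[OF p s r1 m, of "x0 + 1"] by blast
    show False using NoHValley[OF p s r1 r2 x1(1,2) _ x1(3) x3(2)] x3(1) by simp
  qed
qed

end




lemma LX_pos:
  fixes fX :: "real \<Rightarrow> real"
  assumes nn: "\<forall>t>0. fX t \<ge> 0" and I: "set_integrable lborel {0<..} fX"
    and one: "(LBINT t:{0<..}. fX t) = 1" and x: "x > 0"
  shows "lap fX x > 0"
proof (rule ccontr)
  assume "\<not> lap fX x > 0"
  moreover have "lap fX x \<ge> 0" using nn by (intro lap_nonneg) auto
  ultimately have z: "lap fX x = 0" by simp
  have Ie: "set_integrable lborel {0<..} (\<lambda>t. fX t * exp (- t * x))"
    using Lw_si[OF Lw_from_int[OF I] x] .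
  have "AE t in lborel. indicator {0<..} t *\<^sub>R (fX t * exp (- t * x)) = 0"
    using z Ie nn unfolding lap_def set_lebesgue_integral_def set_integrable_def
    by (subst integral_nonneg_eq_0_iff_AE[symmetric]) (auto simp: indicator_def)
  then have "AE t in lborel. indicator {0<..} t *\<^sub>R fX t = 0"
    by (rule eventually_mono) (simp add: indicator_def split: if_splits)
  then have "(LBINT t:{0<..}. fX t) = 0"
    unfolding set_lebesgue_integral_def by (rule integral_eq_zero_AE)
  then show False using one by simp
qed

theorem theorem4:
  fixes fX fY :: "real \<Rightarrow> real"
  assumes dX: "is_density fX" and dY: "is_density fY"
    and posY: "\<forall>t>0. fY t > 0"
  shows "((mono_on {0<..} (\<lambda>t. fX t / fY t)
          \<or> (\<exists>ts>0. mono_on {0<..<ts} (\<lambda>t. fX t / fY t)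
                   \<and> antimono_on {ts<..} (\<lambda>t. fX t / fY t)
                   \<and> (\<exists>l::ereal. ((\<lambda>x. ereal (H_fun (lap fX) (lap fY) x)) \<longlongrightarrow> l) (at_right 0)
                             \<and> l \<ge> 0)))
         \<longrightarrow> lt_r_le fY fX)
       \<and> ((antimono_on {0<..} (\<lambda>t. fX t / fY t)
          \<or> (\<exists>ts>0. antimono_on {0<..<ts} (\<lambda>t. fX t / fY t)
                   \<and> mono_on {ts<..} (\<lambda>t. fX t / fY t)
                   \<and> (\<exists>l::ereal. ((\<lambda>x. ereal (H_fun (lap fX) (lap fY) x)) \<longlongrightarrow> l) (at_right 0)
                             \<and> l \<le> 0)))
         \<longrightarrow> lt_r_le fX fY)"
proof -
  have nnX: "\<forall>t>0. fX t \<ge> 0" and IX: "set_integrable lborel {0<..} fX"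
    and oneX: "(LBINT t:{0<..}. fX t) = 1" using dX unfolding is_density_def by auto
  have IY: "set_integrable lborel {0<..} fY" using dY unfolding is_density_def by auto
  have LwX: "Lw fX" by (rule Lw_from_int[OF IX])
  have LwY: "Lw fY" by (rule Lw_from_int[OF IY])
  have LwmX: "Lw (\<lambda>t. - fX t)" by (rule Lw_minus[OF LwX])
  have Hneg: "Hm fY (\<lambda>t. - fX t) x = - Hm fY fX x" for x
  proof -
    have "lap (\<lambda>t. t * - fX t) x = lap (\<lambda>t. - (t * fX t)) x" by (intro lap_cong) simp
    then show ?thesis unfolding Hm_def by (simp add: lap_minus)
  qed
  have ev0: "\<forall>\<^sub>F x in at_right (0::real). 0 < x \<and> x < x0" if "x0 > 0" for x0
    using that by (auto simp: eventually_at_right_field intro!: exI[of _ x0])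
  have part1: "lt_r_le fY fX"
    if A: "mono_on {0<..} (\<lambda>t. fX t / fY t)
          \<or> (\<exists>ts>0. mono_on {0<..<ts} (\<lambda>t. fX t / fY t)
                   \<and> antimono_on {ts<..} (\<lambda>t. fX t / fY t)
                   \<and> (\<exists>l::ereal. ((\<lambda>x. ereal (H_fun (lap fX) (lap fY) x)) \<longlongrightarrow> l) (at_right 0)
                             \<and> l \<ge> 0))"
    unfolding lt_r_le_def
    using A
  proof
    assume "mono_on {0<..} (\<lambda>t. fX t / fY t)"
    then show "antimono_on {0<..} (\<lambda>x. lap fX x / lap fY x)" by (rule G1[OF LwY posY LwX])
  next
    assume "\<exists>ts>0. mono_on {0<..<ts} (\<lambda>t. fX t / fY t)
                   \<and> antimono_on {ts<..} (\<lambda>t. fX t / fY t)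
                   \<and> (\<exists>l::ereal. ((\<lambda>x. ereal (H_fun (lap fX) (lap fY) x)) \<longlongrightarrow> l) (at_right 0)
                             \<and> l \<ge> 0)"
    then obtain ts l where ts: "ts > 0" "mono_on {0<..<ts} (\<lambda>t. fX t / fY t)" "antimono_on {ts<..} (\<lambda>t. fX t / fY t)"
      and l: "((\<lambda>x. ereal (H_fun (lap fX) (lap fY) x)) \<longlongrightarrow> l) (at_right 0)" "l \<ge> 0" by blast
    show "antimono_on {0<..} (\<lambda>x. lap fX x / lap fY x)"
    proof (rule G2[OF LwY posY LwX ts])
      fix m x0 :: real assume m: "m < 0" and x0: "x0 > 0"
      have "ereal m < 0" using m by simp
      then have "ereal m < l" using l(2) by (rule less_le_trans)
      then have "\<forall>\<^sub>F x in at_right 0. ereal m < ereal (H_fun (lap fX) (lap fY) x)"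
        using order_tendstoD(1)[OF l(1)] by blast
      then have "\<forall>\<^sub>F x in at_right 0. (0 < x \<and> x < x0) \<and> ereal m < ereal (H_fun (lap fX) (lap fY) x)"
        using ev0[OF x0] by (simp add: eventually_conj_iff)
      then obtain x where x: "0 < x" "x < x0" "m < H_fun (lap fX) (lap fY) x"
        using eventually_happens[of _ "at_right (0::real)"] by auto
      then show "\<exists>x1. 0 < x1 \<and> x1 < x0 \<and> Hm fY fX x1 > m"
        using H_fun_eq[OF LwY posY LwX x(1)] by auto
    qed
  qed
  have part2: "lt_r_le fX fY"
    if A: "antimono_on {0<..} (\<lambda>t. fX t / fY t)
          \<or> (\<exists>ts>0. antimono_on {0<..<ts} (\<lambda>t. fX t / fY t)
                   \<and> mono_on {ts<..} (\<lambda>t. fX t / fY t)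
                   \<and> (\<exists>l::ereal. ((\<lambda>x. ereal (H_fun (lap fX) (lap fY) x)) \<longlongrightarrow> l) (at_right 0)
                             \<and> l \<le> 0))"
  proof -
    have flip1: "mono_on S (\<lambda>t. - fX t / fY t)" if "antimono_on S (\<lambda>t. fX t / fY t)" for S
      using that by (auto simp: monotone_on_def)
    have flip2: "antimono_on S (\<lambda>t. - fX t / fY t)" if "mono_on S (\<lambda>t. fX t / fY t)" for S
      using that by (auto simp: monotone_on_def)
    have "antimono_on {0<..} (\<lambda>x. lap (\<lambda>t. - fX t) x / lap fY x)"
      using A
    proof
      assume "antimono_on {0<..} (\<lambda>t. fX t / fY t)"
      then show ?thesis by (rule G1[OF LwY posY LwmX flip1])
    next
      assume "\<exists>ts>0. antimono_on {0<..<ts} (\<lambda>t. fX t / fY t)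
                   \<and> mono_on {ts<..} (\<lambda>t. fX t / fY t)
                   \<and> (\<exists>l::ereal. ((\<lambda>x. ereal (H_fun (lap fX) (lap fY) x)) \<longlongrightarrow> l) (at_right 0)
                             \<and> l \<le> 0)"
      then obtain ts l where ts: "ts > 0" "antimono_on {0<..<ts} (\<lambda>t. fX t / fY t)" "mono_on {ts<..} (\<lambda>t. fX t / fY t)"
        and l: "((\<lambda>x. ereal (H_fun (lap fX) (lap fY) x)) \<longlongrightarrow> l) (at_right 0)" "l \<le> 0" by blast
      show ?thesis
      proof (rule G2[OF LwY posY LwmX ts(1) flip1[OF ts(2)] flip2[OF ts(3)]])
        fix m x0 :: real assume m: "m < 0" and x0: "x0 > 0"
        have "0 < ereal (- m)" using m by simp
        with l(2) have "l < ereal (- m)" by (rule le_less_trans)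
        then have "\<forall>\<^sub>F x in at_right 0. ereal (H_fun (lap fX) (lap fY) x) < ereal (- m)"
          using order_tendstoD(2)[OF l(1)] by blast
        then have "\<forall>\<^sub>F x in at_right 0. (0 < x \<and> x < x0) \<and> ereal (H_fun (lap fX) (lap fY) x) < ereal (- m)"
          using ev0[OF x0] by (simp add: eventually_conj_iff)
        then obtain x where x: "0 < x" "x < x0" "H_fun (lap fX) (lap fY) x < - m"
          using eventually_happens[of _ "at_right (0::real)"] by auto
        then show "\<exists>x1. 0 < x1 \<and> x1 < x0 \<and> Hm fY (\<lambda>t. - fX t) x1 > m"
          using H_fun_eq[OF LwY posY LwX x(1)] Hneg[of x] by auto
      qed
    qed
    then have mono_g: "mono_on {0<..} (\<lambda>x. lap fX x / lap fY x)"
      by (auto simp: monotone_on_def lap_minus)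
    show ?thesis unfolding lt_r_le_def
    proof (rule monotone_onI)
      fix x y :: real assume xy: "x \<in> {0<..}" "y \<in> {0<..}" "x \<le> y"
      have gx: "lap fX x / lap fY x > 0"
        using LX_pos[OF nnX IX oneX] LY_pos[OF LwY posY] xy by simp
      have "lap fX x / lap fY x \<le> lap fX y / lap fY y" using mono_onD[OF mono_g xy] .
      then have "inverse (lap fX y / lap fY y) \<le> inverse (lap fX x / lap fY x)"
        using gx by (intro le_imp_inverse_le) auto
      then show "lap fY y / lap fX y \<le> lap fY x / lap fX x" by simp
    qed
  qed
  show ?thesis using part1 part2 by blast
qed

end
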